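(* Assume the Continuity Assumption, the Consistency Assumption and the Estimator Continuity Assumption below, and let $g^*$ be the optimal fair classifier described below. Let $\tilde g$ be the pseudo-oracle classifier described below. Then $$\limsup_{n\to\infty}\Big(\mathbb{E}_{\mathcal{D}_n}[\mathcal{R}(\tilde g)]-\mathcal{R}(g^* )\Big)\le0.$$
   Context: Let $(X,S,Y)$ be a random tuple in $\mathbb{R}^d\times\{0,1\}\times\{0,1\}$ with joint law $\mathbb{P}$, $\mathbb{P}(S=1)\in(0,1)$, $\mathbb{P}(Y=1)\in(0,1)$. Classifiers are measurable $g:\mathbb{R}^d\times\{0,1\}\to\{0,1\}$, $\mathcal{G}$ is the set of all classifiers, $\mathcal{R}(g)=\mathbb{P}(g(X,S)\neq Y)$ (for data-dependent $g$, over a fresh independent copy, conditional on the data). $\eta(x,s)=\mathbb{P}(Y=1\mid X=x,S=s)$; $\mathbb{E}_{X\mid S=s}$ is expectation w.r.t. the conditional law of $X$ given $S=s$. The optimal fair classifier $g^*$ is a solution of $\min_{g\in\mathcal{G}}\{\mathcal{R}(g):\mathbb{P}(g(X,S)=1\mid Y=1,S=1)=\mathbb{P}(g(X,S)=1\mid Y=1,S=0)\}$, of the form $g^*(x,1)=\mathbf{1}\{1\le\eta(x,1)(2-\theta^*/\mathbb{P}(Y=1,S=1))\}$, $g^*(x,0)=\mathbf{1}\{1\le\eta(x,0)(2+\theta^*/\mathbb{P}(Y=1,S=0))\}$ with $\theta^*$ equalizing $\mathbb{E}_{X\mid S=s}[\eta(X,s)g^*(X,s)]/\mathbb{P}(Y=1\mid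 S=s)$ across $s\in\{0,1\}$. Continuity Assumption: for each $s$, $t\mapsto\mathbb{P}(\eta(X,S)\le t\mid S=s)$ is continuous on $(0,1)$, and $\mathbb{P}(\eta(X,s)\ge1/2\mid S=s)>0$. A labeled sample $\mathcal{D}_n$ of $n$ i.i.d. copies of $(X,S,Y)$ is given, and $\hat\eta:\mathbb{R}^d\times\{0,1\}\to[0,1]$ is an estimator built from $\mathcal{D}_n$. Consistency Assumption: for all $s$, (i) $\mathbb{E}_{\mathcal{D}_n}\mathbb{E}_{X\mid S=s}|\eta(X,s)-\hat\eta(X,s)|\to0$ as $n\to\infty$; (ii) there is a sequence $c_{n,N}>0$ with $c_{n,N}\to0$ and $1/(c_{n,N}\sqrt N)\to0$ such that $\mathbb{E}_{X\mid S=s}[\hat\eta(X,s)]\ge c_{n,N}$ almost surely. Estimator Continuity Assumption: almost surely, for all $s$, $t\mapsto\mathbb{P}(\hat\eta(X,s)\le t\mid S=s)$ is continuous on $(0,1)$. Pseudo-oracle: for $\theta\in\mathbb{R}$ let $\tilde g_\theta(x,1)=\mathbf{1}\{1\le\hat\eta(x,1)(2-\theta/(\mathbb{E}_{X\mid S=1}[\hat\eta(X,1)]\,\mathbb{P}(S=1)))\}$ and $\tilde g_\theta(x,0)=\mathbf{1}\{1\le\hat\eta(x,0)(2+\theta/(\mathbb{E}_{X\mid S=0}[\hat\eta(X,0)]\,\mathbb{P}(S=0)))\}$; let $\tilde\theta$ be a solution of $\frac{\mathbb{E}_{X\mid S=1}[\hat\eta(X,1)\tilde g_\theta(X,1)]}{\mathbb{E}_{X\mid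 S=1}[\hat\eta(X,1)]}=\frac{\mathbb{E}_{X\mid S=0}[\hat\eta(X,0)\tilde g_\theta(X,0)]}{\mathbb{E}_{X\mid S=0}[\hat\eta(X,0)]}$, and $\tilde g=\tilde g_{\tilde\theta}$. *)

theory Defs
  imports "HOL-Probability.Probability"
begin

text \<open>A point z of the joint space is (X, S, Y); the labels S and Y in {0,1} are
  encoded as bool (True = 1).\<close>

type_synonym ('x) obs = "'x \<times> bool \<times> bool"

definition obs_space :: "('x::topological_space) obs measure" where
  "obs_space = borel \<Otimes>\<^sub>M (count_space UNIV \<Otimes>\<^sub>M count_space UNIV)"

definition pS :: "'x obs measure \<Rightarrow> bool \<Rightarrow> real" where
  "pS P s = measure P {z \<in> space P. fst (snd z) = s}"

definition pY :: "'x obs measure \<Rightarrow> real" where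
  "pY P = measure P {z \<in> space P. snd (snd z)}"

definition pYS :: "'x obs measure \<Rightarrow> bool \<Rightarrow> real" where
  "pYS P s = measure P {z \<in> space P. snd (snd z) \<and> fst (snd z) = s}"

definition condE :: "'x obs measure \<Rightarrow> bool \<Rightarrow> ('x \<Rightarrow> real) \<Rightarrow> real" where
  "condE P s f = (\<integral>z. (if fst (snd z) = s then f (fst z) else 0) \<partial>P) / pS P s"

text \<open>eta is (a version of) the regression function eta(x,s) = P(Y=1 | X=x, S=s).\<close>
definition is_regression :: "('x::topological_space) obs measure \<Rightarrow> ('x \<Rightarrow> bool \<Rightarrow> real) \<Rightarrow> bool" where
  "is_regression P eta \<longleftrightarrow>
     (\<lambda>(x, s). eta x s) \<in> borel_measurable (borel \<Otimes>\<^sub>M count_space UNIV) \<and>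
     (\<forall>x s. 0 \<le> eta x s \<and> eta x s \<le> 1) \<and>
     (\<forall>A \<in> sets (borel \<Otimes>\<^sub>M count_space UNIV).
        (\<integral>z. indicator A (fst z, fst (snd z)) * eta (fst z) (fst (snd z)) \<partial>P)
          = measure P {z \<in> space P. (fst z, fst (snd z)) \<in> A \<and> snd (snd z)})"

definition classifier :: "(('x::topological_space) \<Rightarrow> bool \<Rightarrow> bool) \<Rightarrow> bool" where
  "classifier g \<longleftrightarrow>
     (\<lambda>(x, s). g x s) \<in> measurable (borel \<Otimes>\<^sub>M count_space UNIV) (count_space UNIV)"

definition risk :: "'x obs measure \<Rightarrow> ('x \<Rightarrow> bool \<Rightarrow> bool) \<Rightarrow> real" where
  "risk P g = measure P {z \<in> space P. g (fst z) (fst (snd z)) \<noteq> snd (snd z)}"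

definition tpr :: "'x obs measure \<Rightarrow> ('x \<Rightarrow> bool \<Rightarrow> bool) \<Rightarrow> bool \<Rightarrow> real" where
  "tpr P g s = measure P {z \<in> space P. g (fst z) (fst (snd z)) \<and> snd (snd z) \<and> fst (snd z) = s}
               / pYS P s"

definition fair :: "'x obs measure \<Rightarrow> ('x \<Rightarrow> bool \<Rightarrow> bool) \<Rightarrow> bool" where
  "fair P g \<longleftrightarrow> tpr P g True = tpr P g False"

definition optimal_fair :: "('x::topological_space) obs measure \<Rightarrow> ('x \<Rightarrow> bool \<Rightarrow> bool) \<Rightarrow> bool" where
  "optimal_fair P g \<longleftrightarrow> classifier g \<and> fair P g \<and>
     (\<forall>g'. classifier g' \<and> fair P g' \<longrightarrow> risk P g \<le> risk P g')"

definition fair_form :: "'x obs measure \<Rightarrow> ('x \<Rightarrow> bool \<Rightarrow> real) \<Rightarrow> ('x \<Rightarrow> bool \<Rightarrow> bool) \<Rightarrow> bool" where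
  "fair_form P eta g \<longleftrightarrow> (\<exists>\<theta>::real.
     (\<forall>x. g x True = (1 \<le> eta x True * (2 - \<theta> / pYS P True))) \<and>
     (\<forall>x. g x False = (1 \<le> eta x False * (2 + \<theta> / pYS P False))) \<and>
     condE P True (\<lambda>x. eta x True * of_bool (g x True)) / (pYS P True / pS P True)
       = condE P False (\<lambda>x. eta x False * of_bool (g x False)) / (pYS P False / pS P False))"

definition gtil :: "'x obs measure \<Rightarrow> ('x \<Rightarrow> bool \<Rightarrow> real) \<Rightarrow> real \<Rightarrow> 'x \<Rightarrow> bool \<Rightarrow> bool" where
  "gtil P eh \<theta> x s =
     (if s then 1 \<le> eh x True * (2 - \<theta> / (condE P True (\<lambda>x. eh x True) * pS P True))
      else 1 \<le> eh x False * (2 + \<theta> / (condE P False (\<lambda>x. eh x False) * pS P False)))"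

definition pseudo_eq :: "'x obs measure \<Rightarrow> ('x \<Rightarrow> bool \<Rightarrow> real) \<Rightarrow> real \<Rightarrow> bool" where
  "pseudo_eq P eh \<theta> \<longleftrightarrow>
     condE P True (\<lambda>x. eh x True * of_bool (gtil P eh \<theta> x True)) / condE P True (\<lambda>x. eh x True)
     = condE P False (\<lambda>x. eh x False * of_bool (gtil P eh \<theta> x False)) / condE P False (\<lambda>x. eh x False)"

definition sample :: "'x obs measure \<Rightarrow> nat \<Rightarrow> (nat \<Rightarrow> 'x obs) measure" where
  "sample P n = PiM {..<n} (\<lambda>_. P)"

end

theory Submission
  imports Defs
begin

definition Is :: "('x::topological_space) obs measure \<Rightarrow> bool \<Rightarrow> ('x \<Rightarrow> real) \<Rightarrow> real" where
  "Is P s f = (\<integral>z. (if fst (snd z) = s then f (fst z) else 0) \<partial>P)"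

locale setting =
  fixes P :: "('x::topological_space) obs measure"
  assumes prob: "prob_space P" and sets_P: "sets P = sets obs_space"
begin

interpretation prob_space P by (rule prob)

lemma meas_X[measurable]: "fst \<in> measurable P borel"
  unfolding measurable_cong_sets[OF sets_P refl] obs_space_def by measurable

lemma meas_S[measurable]: "(\<lambda>z. fst (snd z)) \<in> measurable P (count_space UNIV)"
  unfolding measurable_cong_sets[OF sets_P refl] obs_space_def by measurable

lemma meas_Y[measurable]: "(\<lambda>z. snd (snd z)) \<in> measurable P (count_space UNIV)"
  unfolding measurable_cong_sets[OF sets_P refl] obs_space_def by measurable

lemma Is_meas[measurable]: assumes [measurable]: "(f::_\<Rightarrow>real) \<in> borel_measurable borel" shows
   "(\<lambda>z. if fst (snd z) = s then f (fst z) else 0) \<in> borel_measurable P"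
  by measurable

lemma Is_int: "(f::_\<Rightarrow>real) \<in> borel_measurable borel \<Longrightarrow> (\<And>x. \<bar>f x\<bar> \<le> (B::real)) \<Longrightarrow>
   integrable P (\<lambda>z. if fst (snd z) = s then f (fst z) else 0)"
  apply (rule integrable_const_bound[where B=B])
   apply (auto intro!: AE_I2)
  using order_trans abs_ge_zero apply blast
  done

definition bnd :: "('x \<Rightarrow> real) \<Rightarrow> bool" where
  "bnd f \<longleftrightarrow> f \<in> borel_measurable borel \<and> (\<exists>B. \<forall>x. \<bar>f x\<bar> \<le> B)"

lemma bnd_int: "bnd f \<Longrightarrow> integrable P (\<lambda>z. if fst (snd z) = s then f (fst z) else 0)"
  unfolding bnd_def using Is_int by blast

lemma Is_add: "bnd f \<Longrightarrow> bnd g \<Longrightarrow> Is P s (\<lambda>x. f x + g x) = Is P s f + Is P s g"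
  unfolding Is_def
  by (subst Bochner_Integration.integral_add[symmetric]) (auto intro!: bnd_int Bochner_Integration.integral_cong)

lemma Is_diff: "bnd f \<Longrightarrow> bnd g \<Longrightarrow> Is P s (\<lambda>x. f x - g x) = Is P s f - Is P s g"
  unfolding Is_def
  by (subst Bochner_Integration.integral_diff[symmetric]) (auto intro!: bnd_int Bochner_Integration.integral_cong)

lemma Is_cmult: "Is P s (\<lambda>x. c * f x) = c * Is P s f"
proof -
  have eq: "(\<lambda>z. if fst (snd z) = s then c * f (fst z) else 0) = (\<lambda>z. c * (if fst (snd z) = s then f (fst z) else 0))"
    by auto
  show ?thesis unfolding Is_def eq by (rule integral_mult_right_zero)
qed

lemma Is_mono: "bnd f \<Longrightarrow> bnd g \<Longrightarrow> (\<And>x. f x \<le> g x) \<Longrightarrow> Is P s f \<le> Is P s g"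
  unfolding Is_def
  by (rule integral_mono) (auto intro!: bnd_int)

lemma Is_nonneg: "(\<And>x. 0 \<le> f x) \<Longrightarrow> 0 \<le> Is P s f"
  unfolding Is_def
  by (rule integral_nonneg_AE) auto

lemma Is_abs: "\<bar>Is P s f\<bar> \<le> Is P s (\<lambda>x. \<bar>f x\<bar>)"
proof -
  have eq: "(\<lambda>z. if fst (snd z) = s then \<bar>f (fst z)\<bar> else 0) = (\<lambda>z. \<bar>if fst (snd z) = s then f (fst z) else 0\<bar>)"
    by auto
  show ?thesis unfolding Is_def eq by (rule integral_abs_bound)
qed

lemma pS_Is: "pS P s = Is P s (\<lambda>_. 1)"
proof -
  have "pS P s = measure P ({z. fst (snd z) = s} \<inter> space P)"
    unfolding pS_def by (auto intro: arg_cong[where f="measure P"])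
  moreover have eq: "(\<lambda>z. if fst (snd z) = s then 1 else 0::real) = indicator {z. fst (snd z) = s}"
    by (auto simp: indicator_def fun_eq_iff)
  ultimately show ?thesis unfolding Is_def eq integral_indicator by simp
qed

lemma Is_const: "Is P s (\<lambda>_. c) = c * pS P s"
  using Is_cmult[of s c "\<lambda>_. 1"] pS_Is by simp

lemma bnd_const[simp]: "bnd (\<lambda>_. c)"
  unfolding bnd_def by auto

lemma pS_sum: "pS P True + pS P False = 1"
proof -
  have "pS P True + pS P False = Is P True (\<lambda>_. 1) + Is P False (\<lambda>_. 1)" by (simp add: pS_Is)
  also have "\<dots> = (\<integral>z. (if fst (snd z) = True then 1 else 0) + (if fst (snd z) = False then 1 else 0) \<partial>P)"
    unfolding Is_def
    by (rule Bochner_Integration.integral_add[symmetric]; rule bnd_int; simp)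
  also have "\<dots> = (\<integral>z. 1 \<partial>P)"
    by (rule Bochner_Integration.integral_cong) auto
  also have "\<dots> = 1" by (simp add: prob_space)
  finally show ?thesis .
qed

lemma intb: "(f::_\<Rightarrow>real) \<in> borel_measurable P \<Longrightarrow> (\<And>z. \<bar>f z\<bar> \<le> B) \<Longrightarrow> integrable P f"
  by (rule integrable_const_bound[where B=B]) auto

lemma int_ofbool: assumes "Measurable.pred P Q" shows "(\<integral>z. of_bool (Q z) \<partial>P) = measure P {z\<in>space P. Q z}"
proof -
  have eq: "(\<lambda>z. of_bool (Q z)::real) = indicator {z. Q z}" by (auto simp: fun_eq_iff)
  have "{z. Q z} \<inter> space P = {z\<in>space P. Q z}" by auto
  then show ?thesis unfolding eq integral_indicator by simp
qed

lemma reg_Is: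
  assumes reg: "is_regression P eta" and B: "B \<in> sets borel"
  shows "Is P s (\<lambda>x. indicator B x * eta x s)
        = measure P {z\<in>space P. fst z \<in> B \<and> fst (snd z) = s \<and> snd (snd z)}"
proof -
  have A: "B \<times> {s} \<in> sets (borel \<Otimes>\<^sub>M count_space UNIV)"
    using B by (intro pair_measureI) auto
  from reg have h1: "(\<integral>z. indicator (B \<times> {s}) (fst z, fst (snd z)) * eta (fst z) (fst (snd z)) \<partial>P)
          = measure P {z \<in> space P. (fst z, fst (snd z)) \<in> B \<times> {s} \<and> snd (snd z)}"
    unfolding is_regression_def using A by blast
  moreover have h2: "(\<lambda>z. indicator (B \<times> {s}) (fst z, fst (snd z)) * eta (fst z) (fst (snd z)))
     = (\<lambda>z. if fst (snd z) = s then indicator B (fst z) * eta (fst z) s else 0)"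
    by (auto simp: fun_eq_iff indicator_def)
  moreover have h3: "{z \<in> space P. (fst z, fst (snd z)) \<in> B \<times> {s} \<and> snd (snd z)}
      = {z\<in>space P. fst z \<in> B \<and> fst (snd z) = s \<and> snd (snd z)}" by auto
  ultimately show ?thesis unfolding Is_def using h1 unfolding h2 h3 by simp
qed

lemma reg_meas: assumes reg: "is_regression P eta" shows "(\<lambda>x. eta x s) \<in> borel_measurable borel"
proof -
  have "(\<lambda>(x, s). eta x s) \<in> borel_measurable (borel \<Otimes>\<^sub>M count_space UNIV)"
    using reg unfolding is_regression_def by blast
  then have "(\<lambda>x. (\<lambda>(x, s). eta x s) (x, s)) \<in> borel_measurable borel"
    by measurable
  then show ?thesis by simp
qed

lemma reg_pYS: assumes reg: "is_regression P eta" shows "pYS P s = Is P s (\<lambda>x. eta x s)"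
  using reg_Is[OF reg, of UNIV s] unfolding pYS_def by (auto intro: arg_cong[where f="measure P"])

definition cl :: "('x \<Rightarrow> bool \<Rightarrow> bool) \<Rightarrow> bool" where
  "cl g \<longleftrightarrow> (\<forall>s. (\<lambda>x. g x s) \<in> measurable borel (count_space UNIV))"

lemma reg_g: assumes reg: "is_regression P eta" and g: "cl g"
  shows "measure P {z\<in>space P. fst (snd z) = s \<and> g (fst z) s \<and> snd (snd z)} = Is P s (\<lambda>x. of_bool (g x s) * eta x s)"
proof -
  have m[measurable]: "(\<lambda>x. g x s) \<in> measurable borel (count_space UNIV)" using g cl_def by blast
  have B: "{x. g x s} \<in> sets borel" by measurable
  have "(\<lambda>x. of_bool (g x s) * eta x s) = (\<lambda>x. indicator {x. g x s} x * eta x s)" by (auto simp: fun_eq_iff)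
  then show ?thesis using reg_Is[OF reg B, of s] by (auto intro: arg_cong[where f="measure P"])
qed

lemma cl_pred[measurable]: assumes "cl g" shows "Measurable.pred P (\<lambda>z. g (fst z) (fst (snd z)))"
proof -
  have [measurable]: "(\<lambda>x. g x s) \<in> measurable borel (count_space UNIV)" for s using assms cl_def by blast
  have eq: "(\<lambda>z. g (fst z) (fst (snd z))) = (\<lambda>z. if fst (snd z) then g (fst z) True else g (fst z) False)"
    by (auto simp: fun_eq_iff)
  show ?thesis unfolding eq by measurable
qed

lemma cl_meas[measurable]: assumes "cl g" shows "(\<lambda>x. g x s) \<in> measurable borel (count_space UNIV)"
  using assms cl_def by blast

lemma risk_formula:
  assumes reg: "is_regression P eta" and g: "cl g"
  shows "risk P g = pY P + (Is P True (\<lambda>x. of_bool (g x True)) - 2 * Is P True (\<lambda>x. of_bool (g x True) * eta x True))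
                         + (Is P False (\<lambda>x. of_bool (g x False)) - 2 * Is P False (\<lambda>x. of_bool (g x False) * eta x False))"
proof -
  note [measurable] = cl_pred[OF g] cl_meas[OF g]
  define a :: "bool \<Rightarrow> 'x obs \<Rightarrow> real" where "a s z = (if fst (snd z) = s then of_bool (g (fst z) s) else (0::real))" for s z
  define b :: "bool \<Rightarrow> 'x obs \<Rightarrow> real" where "b s z = (of_bool (fst (snd z) = s \<and> g (fst z) s \<and> snd (snd z))::real)" for s z
  have [measurable]: "a s \<in> borel_measurable P" "b s \<in> borel_measurable P" for s
    unfolding a_def b_def by measurable
  have ia: "integrable P (a s)" for s by (rule intb[where B=1]) (auto simp: a_def)
  have ib: "integrable P (b s)" for s by (rule intb[where B=1]) (auto simp: b_def)
  have iy: "integrable P (\<lambda>z. of_bool (snd (snd z))::real)" by (rule intb[where B=1]) auto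
  have pw: "(\<lambda>z. of_bool (g (fst z) (fst (snd z)) \<noteq> snd (snd z))::real)
     = (\<lambda>z. of_bool (snd (snd z)) + a True z + a False z - 2 * b True z - 2 * b False z)"
    by (auto simp: fun_eq_iff a_def b_def)
  have "risk P g = (\<integral>z. of_bool (g (fst z) (fst (snd z)) \<noteq> snd (snd z)) \<partial>P)"
    unfolding risk_def by (subst int_ofbool) auto
  also have "\<dots> = (\<integral>z. of_bool (snd (snd z)) \<partial>P) + integral\<^sup>L P (a True) + integral\<^sup>L P (a False)
                 - 2 * integral\<^sup>L P (b True) - 2 * integral\<^sup>L P (b False)"
    unfolding pw using ia ib iy by simp
  also have "(\<integral>z. of_bool (snd (snd z)) \<partial>P) = pY P"
    unfolding pY_def by (subst int_ofbool) auto
  finally have r: "risk P g = pY P + integral\<^sup>L P (a True) + integral\<^sup>L P (a False)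
                 - 2 * integral\<^sup>L P (b True) - 2 * integral\<^sup>L P (b False)" .
  have A: "integral\<^sup>L P (a s) = Is P s (\<lambda>x. of_bool (g x s))" for s
    unfolding a_def Is_def ..
  have B: "integral\<^sup>L P (b s) = Is P s (\<lambda>x. of_bool (g x s) * eta x s)" for s
    unfolding b_def by (subst int_ofbool) (auto simp: reg_g[OF reg g])
  show ?thesis unfolding r A B by simp
qed

lemma bnd_add[intro]: "bnd f \<Longrightarrow> bnd g \<Longrightarrow> bnd (\<lambda>x. f x + g x)"
  unfolding bnd_def by (auto intro!: exI[where x="_ + _"] abs_triangle_ineq[THEN order_trans] add_mono)

lemma bnd_diff[intro]: "bnd f \<Longrightarrow> bnd g \<Longrightarrow> bnd (\<lambda>x. f x - g x)"
  unfolding bnd_def by (auto intro!: exI[where x="_ + _"] abs_triangle_ineq4[THEN order_trans] add_mono)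

lemma bnd_mult[intro]: "bnd f \<Longrightarrow> bnd g \<Longrightarrow> bnd (\<lambda>x. f x * g x)"
  unfolding bnd_def
proof (elim conjE exE, intro conjI)
  fix B1 B2 assume "\<forall>x. \<bar>f x\<bar> \<le> B1" "\<forall>x. \<bar>g x\<bar> \<le> B2"
  then show "\<exists>B. \<forall>x. \<bar>f x * g x\<bar> \<le> B"
    by (intro exI[where x="B1*B2"]) (auto simp: abs_mult intro!: mult_mono order_trans[OF abs_ge_zero])
qed auto

lemma bnd_abs[intro]: "bnd f \<Longrightarrow> bnd (\<lambda>x. \<bar>f x\<bar>)"
  unfolding bnd_def by auto

lemma bnd_01: "(f::_\<Rightarrow>real) \<in> borel_measurable borel \<Longrightarrow> (\<And>x. 0 \<le> f x \<and> f x \<le> 1) \<Longrightarrow> bnd f"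
  unfolding bnd_def by (auto intro!: exI[where x=1] simp: abs_le_iff)

lemma bnd_ofbool[intro]: "Measurable.pred borel Q \<Longrightarrow> bnd (\<lambda>x. of_bool (Q x))"
  by (rule bnd_01) auto

lemma condE_Is: "condE P s f = Is P s f / pS P s"
  unfolding condE_def Is_def ..

end

definition qS :: "('x::topological_space) obs measure \<Rightarrow> ('x \<Rightarrow> bool \<Rightarrow> real) \<Rightarrow> bool \<Rightarrow> real" where
  "qS P eta s = Is P s (\<lambda>x. of_bool (1/2 \<le> eta x s))"

definition dlt :: "('x::topological_space) obs measure \<Rightarrow> ('x \<Rightarrow> bool \<Rightarrow> real) \<Rightarrow> real" where
  "dlt P eta = min (min (pYS P True / 2) (pYS P False / 2))
                   (min (qS P eta False * pYS P True / 24) (qS P eta True * pYS P False / 24))"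

definition Kc :: "('x::topological_space) obs measure \<Rightarrow> ('x \<Rightarrow> bool \<Rightarrow> real) \<Rightarrow> real" where
  "Kc P eta = 2 + 4 / pYS P True + 4 / pYS P False + 1 / dlt P eta"

locale core = setting P for P :: "('x::topological_space) obs measure" +
  fixes eta :: "'x \<Rightarrow> bool \<Rightarrow> real"
  assumes reg: "is_regression P eta"
    and pT: "0 < pS P True" "pS P True < 1"
    and half: "\<And>s. condE P s (\<lambda>x. of_bool (eta x s \<ge> 1/2)) > 0"
begin

interpretation prob_space P by (rule prob)

lemma pS_pos: "0 < pS P s"
  using pT pS_sum by (cases s) auto

lemma eta_r: "0 \<le> eta x s" "eta x s \<le> 1"
  using reg unfolding is_regression_def by auto

lemma eta_m[measurable]: "(\<lambda>x. eta x s) \<in> borel_measurable borel"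
  using reg_meas[OF reg] .

lemma bnd_eta[intro]: "bnd (\<lambda>x. eta x s)"
  using eta_r by (intro bnd_01) auto

lemma q_pos: "0 < qS P eta s"
  using half[of s] pS_pos[of s] unfolding qS_def condE_Is by (simp add: zero_less_divide_iff)

lemma pi_ge: "qS P eta s / 2 \<le> pYS P s"
proof -
  have "qS P eta s / 2 = Is P s (\<lambda>x. 1/2 * of_bool (1/2 \<le> eta x s))"
    unfolding qS_def Is_cmult by simp
  also have "\<dots> \<le> Is P s (\<lambda>x. eta x s)"
    apply (rule Is_mono)
      apply (rule bnd_mult[OF bnd_const bnd_ofbool], measurable)
    using eta_r[of _ s] by auto
  finally show ?thesis using reg_pYS[OF reg] by simp
qed

lemma pi_pos: "0 < pYS P s"
  using pi_ge[of s] q_pos[of s] by simp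

lemma dlt_pos: "0 < dlt P eta"
  unfolding dlt_def using pi_pos q_pos by auto

lemma Kc_ge: "2 + 4 / pYS P True + 4 / pYS P False \<le> Kc P eta" "1 / dlt P eta \<le> Kc P eta"
proof -
  have "0 < 4 / pYS P True" "0 < 4 / pYS P False" "0 < 1 / dlt P eta" using pi_pos dlt_pos by auto
  then show "2 + 4 / pYS P True + 4 / pYS P False \<le> Kc P eta" "1 / dlt P eta \<le> Kc P eta"
    unfolding Kc_def by linarith+
qed

end

lemma t_aux: "0 < (a::real) \<Longrightarrow> 0 < b \<Longrightarrow> a / (2 * a + b) * (2 + b / a) = 1"
proof -
  assume a: "0 < a" and b: "0 < b"
  have "2 + b / a = (2 * a + b) / a" using a by (simp add: field_simps)
  moreover have "2 * a + b \<noteq> 0" using a b by simp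
  ultimately show ?thesis using a by simp
qed

lemma arith_contra:
  fixes q pi Ao As e :: real
  assumes q: "0 < q" and pi: "0 < pi" and Ao: "pi / 2 \<le> Ao" "Ao \<le> 1" and As: "0 < As" "As \<le> 1"
    and h: "q / 2 \<le> As / (2 * As + Ao) * q + e" and e: "e \<le> q * pi / 24"
  shows False
proof -
  have d: "0 < 2 * As + Ao" using As Ao pi by linarith
  have "q / 2 * (2 * As + Ao) \<le> (As / (2 * As + Ao) * q + e) * (2 * As + Ao)"
    using h d by (intro mult_right_mono) auto
  also have "\<dots> = As * q + e * (2 * As + Ao)" using d by (simp add: field_simps)
  finally have "q * Ao \<le> 2 * e * (2 * As + Ao)" by (simp add: field_simps)
  moreover have "e \<ge> 0"
  proof (rule ccontr)
    assume "\<not> e \<ge> 0"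
    then have "2 * e * (2 * As + Ao) < 0" using d by (simp add: mult_neg_pos)
    moreover have "q * Ao > 0" using q Ao pi by simp
    ultimately show False using \<open>q * Ao \<le> 2 * e * (2 * As + Ao)\<close> by linarith
  qed
  moreover have "2 * e * (2 * As + Ao) \<le> 2 * e * 3" using \<open>e \<ge> 0\<close> As Ao by (intro mult_left_mono) auto
  moreover have "q * (pi / 2) \<le> q * Ao" using q Ao by (intro mult_left_mono) auto
  ultimately have "q * pi / 2 \<le> 6 * e" by linarith
  with e have "q * pi / 2 \<le> q * pi / 4" by linarith
  moreover have "0 < q * pi" using q pi by simp
  ultimately show False by linarith
qed

lemma ratio:
  fixes a b A pi e :: real
  assumes ab: "\<bar>a - b\<bar> \<le> e" and Ap: "\<bar>A - pi\<bar> \<le> e" and b: "0 \<le> b" "b \<le> pi"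
    and A: "pi / 2 \<le> A" and pi: "0 < pi"
  shows "\<bar>a / A - b / pi\<bar> \<le> 4 * e / pi"
proof -
  have A0: "0 < A" using A pi by linarith
  have eq: "a / A - b / pi = ((a - b) * pi + b * (pi - A)) / (A * pi)"
    using A0 pi by (simp add: field_simps)
  have "\<bar>(a - b) * pi\<bar> \<le> e * pi" using ab pi by (simp add: abs_mult mult_right_mono)
  moreover have "\<bar>b * (pi - A)\<bar> \<le> pi * e"
    using b Ap by (simp add: abs_mult abs_minus_commute mult_mono)
  moreover have "\<bar>(a - b) * pi + b * (pi - A)\<bar> \<le> \<bar>(a - b) * pi\<bar> + \<bar>b * (pi - A)\<bar>"
    by (rule abs_triangle_ineq)
  ultimately have n: "\<bar>(a - b) * pi + b * (pi - A)\<bar> \<le> 2 * e * pi" by (simp add: algebra_simps)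
  have "\<bar>a / A - b / pi\<bar> = \<bar>(a - b) * pi + b * (pi - A)\<bar> / (A * pi)"
    unfolding eq using A0 pi by (simp add: abs_divide abs_mult)
  also have "\<dots> \<le> 2 * e * pi / (A * pi)"
    using n A0 pi by (intro divide_right_mono) auto
  also have "\<dots> = 2 * e / A" using pi by simp
  also have "\<dots> \<le> 4 * e / pi"
  proof -
    have e0: "0 \<le> e" using ab by linarith
    have "2 * e * pi \<le> 2 * e * (2 * A)" using A e0 by (intro mult_left_mono) auto
    then have "2 * e * pi \<le> 4 * e * A" by simp
    then show ?thesis using A0 pi by (simp add: field_simps)
  qed
  finally show ?thesis .
qed

locale core2 = core P eta for P :: "('x::topological_space) obs measure" and eta +
  fixes h :: "'x \<Rightarrow> bool \<Rightarrow> real" and \<theta> :: real and gs :: "'x \<Rightarrow> bool \<Rightarrow> bool"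
  assumes hm[measurable]: "\<And>s. (\<lambda>x. h x s) \<in> borel_measurable borel"
    and hr: "\<And>x s. 0 \<le> h x s" "\<And>x s. h x s \<le> 1"
    and peq: "pseudo_eq P h \<theta>"
    and gs: "cl gs" "fair_form P eta gs"
begin

abbreviation A where "A s \<equiv> Is P s (\<lambda>x. h x s)"
abbreviation e where "e s \<equiv> Is P s (\<lambda>x. \<bar>eta x s - h x s\<bar>)"
abbreviation gt where "gt \<equiv> gtil P h \<theta>"

lemma bnd_h[intro]: "bnd (\<lambda>x. h x s)"
  using hr by (intro bnd_01) auto

lemma condE_pS: "condE P s f * pS P s = Is P s f"
  using pS_pos[of s] unfolding condE_Is by simp

lemma gt_T: "gt x True = (1 \<le> h x True * (2 - \<theta> / A True))"
  unfolding gtil_def condE_pS by simp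

lemma gt_F: "gt x False = (1 \<le> h x False * (2 + \<theta> / A False))"
  unfolding gtil_def condE_pS by simp

lemma cl_gt: "cl gt"
  unfolding cl_def
proof
  fix s show "(\<lambda>x. gt x s) \<in> measurable borel (count_space UNIV)"
    by (cases s) (simp_all only: gt_T gt_F, measurable)
qed

lemma bnd_gt[intro]: "bnd (\<lambda>x. of_bool (gt x s))"
  using cl_gt unfolding cl_def by (intro bnd_ofbool) auto

lemma bnd_gs[intro]: "bnd (\<lambda>x. of_bool (gs x s))"
  using gs(1) unfolding cl_def by (intro bnd_ofbool) auto

lemma A_nonneg: "0 \<le> A s" using hr by (intro Is_nonneg) auto

lemma A_le1: "A s \<le> 1"
proof -
  have "A s \<le> Is P s (\<lambda>_. 1)" by (rule Is_mono) (auto simp: hr)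
  also have "\<dots> = pS P s" by (simp add: Is_const)
  also have "\<dots> \<le> 1" using pS_sum pS_pos[of True] pS_pos[of False] by (cases s) auto
  finally show ?thesis .
qed

lemma e_nonneg: "0 \<le> e s" by (intro Is_nonneg) auto

lemma A_close: "\<bar>A s - pYS P s\<bar> \<le> e s"
proof -
  have "A s - pYS P s = Is P s (\<lambda>x. h x s - eta x s)"
    unfolding reg_pYS[OF reg] by (rule Is_diff[symmetric]) auto
  also have "\<bar>\<dots>\<bar> \<le> Is P s (\<lambda>x. \<bar>h x s - eta x s\<bar>)" by (rule Is_abs)
  also have "\<dots> = e s" by (simp add: abs_minus_commute)
  finally show ?thesis .
qed

lemma peq': assumes "A True \<noteq> 0" "A False \<noteq> 0"
  shows "Is P True (\<lambda>x. h x True * of_bool (gt x True)) / A True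
       = Is P False (\<lambda>x. h x False * of_bool (gt x False)) / A False"
  using peq pS_pos[of True] pS_pos[of False] unfolding pseudo_eq_def condE_Is by simp

lemma side:
  fixes s :: bool and k Ao :: real
  assumes As: "0 < A s" and Ao: "0 < Ao" and k: "2 + Ao / A s \<le> k"
    and z: "Is P s (\<lambda>x. h x s * of_bool (1 \<le> h x s * k)) = 0"
  shows "qS P eta s / 2 \<le> A s / (2 * A s + Ao) * qS P eta s + e s"
proof -
  define t where "t = A s / (2 * A s + Ao)"
  have t0: "0 \<le> t" unfolding t_def using As Ao by simp
  have t1: "t * (2 + Ao / A s) = 1"
    unfolding t_def using t_aux[OF As Ao] .
  have pw: "1/2 * of_bool (1/2 \<le> eta x s) \<le> h x s * of_bool (1 \<le> h x s * k) + t * of_bool (1/2 \<le> eta x s) + \<bar>eta x s - h x s\<bar>" for x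
  proof (cases "t \<le> h x s")
    case True
    have "t * (2 + Ao / A s) \<le> h x s * k"
      using True t0 k As Ao by (intro mult_mono) (auto intro: add_nonneg_nonneg)
    then have "1 \<le> h x s * k" using t1 by simp
    moreover have "eta x s \<le> h x s + \<bar>eta x s - h x s\<bar>" by linarith
    ultimately show ?thesis using t0 hr[of x s] by auto
  next
    case False
    moreover have "eta x s \<le> h x s + \<bar>eta x s - h x s\<bar>" by linarith
    ultimately show ?thesis using t0 hr[of x s] by (cases "1/2 \<le> eta x s") (auto simp: mult_nonneg_nonneg)
  qed
  have m: "Measurable.pred borel (\<lambda>x. 1 \<le> h x s * k)" by measurable
  have m2: "Measurable.pred borel (\<lambda>x. 1/2 \<le> eta x s)" by measurable
  have b1: "bnd (\<lambda>x. 1/2 * of_bool (1/2 \<le> eta x s))" by (rule bnd_mult[OF bnd_const bnd_ofbool[OF m2]])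
  have b2: "bnd (\<lambda>x. h x s * of_bool (1 \<le> h x s * k))" by (rule bnd_mult[OF bnd_h bnd_ofbool[OF m]])
  have b3: "bnd (\<lambda>x. t * of_bool (1/2 \<le> eta x s))" by (rule bnd_mult[OF bnd_const bnd_ofbool[OF m2]])
  have b4: "bnd (\<lambda>x. \<bar>eta x s - h x s\<bar>)" by (rule bnd_abs[OF bnd_diff[OF bnd_eta bnd_h]])
  have "qS P eta s / 2 = Is P s (\<lambda>x. 1/2 * of_bool (1/2 \<le> eta x s))"
    unfolding qS_def Is_cmult by simp
  also have "\<dots> \<le> Is P s (\<lambda>x. h x s * of_bool (1 \<le> h x s * k) + t * of_bool (1/2 \<le> eta x s) + \<bar>eta x s - h x s\<bar>)"
    by (rule Is_mono[OF _ _ pw]) (rule b1 bnd_add[OF bnd_add[OF b2 b3] b4])+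
  also have "\<dots> = 0 + t * qS P eta s + e s"
    unfolding qS_def Is_add[OF bnd_add[OF b2 b3] b4] Is_add[OF b2 b3] z Is_cmult ..
  finally show ?thesis unfolding t_def by simp
qed

lemma lag:
  assumes g: "\<And>x. gt x s = (1 \<le> h x s * (2 - c))"
  shows "Is P s (\<lambda>x. (of_bool (gt x s) - of_bool (gs x s)) * (1 - 2 * eta x s))
       \<le> - c * (Is P s (\<lambda>x. h x s * of_bool (gt x s)) - Is P s (\<lambda>x. h x s * of_bool (gs x s))) + 2 * e s"
proof -
  have pw: "(of_bool (gt x s) - of_bool (gs x s)) * (1 - 2 * eta x s)
      \<le> - c * (h x s * of_bool (gt x s) - h x s * of_bool (gs x s)) + 2 * \<bar>eta x s - h x s\<bar>" for x
  proof -
    have e1: "h x s * (2 - c) = 2 * h x s - c * h x s" by (simp add: algebra_simps)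
    have a: "eta x s - h x s \<le> \<bar>eta x s - h x s\<bar>" "h x s - eta x s \<le> \<bar>eta x s - h x s\<bar>" by auto
    show ?thesis using g[of x] a unfolding e1
      by (cases "gt x s"; cases "gs x s") (auto simp: algebra_simps)
  qed
  have b1: "bnd (\<lambda>x. h x s * of_bool (gt x s))" "bnd (\<lambda>x. h x s * of_bool (gs x s))"
    by (rule bnd_mult[OF bnd_h bnd_gt], rule bnd_mult[OF bnd_h bnd_gs])
  have b2: "bnd (\<lambda>x. \<bar>eta x s - h x s\<bar>)" by (rule bnd_abs[OF bnd_diff[OF bnd_eta bnd_h]])
  have "Is P s (\<lambda>x. (of_bool (gt x s) - of_bool (gs x s)) * (1 - 2 * eta x s))
      \<le> Is P s (\<lambda>x. - c * (h x s * of_bool (gt x s) - h x s * of_bool (gs x s)) + 2 * \<bar>eta x s - h x s\<bar>)"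
    by (rule Is_mono[OF _ _ pw]) (rule bnd_mult bnd_diff bnd_gt bnd_gs bnd_const bnd_eta bnd_add b1 b2)+
  also have "\<dots> = - c * (Is P s (\<lambda>x. h x s * of_bool (gt x s)) - Is P s (\<lambda>x. h x s * of_bool (gs x s))) + 2 * e s"
    apply (subst Is_add)
      apply (rule bnd_mult[OF bnd_const bnd_diff[OF b1]])
     apply (rule bnd_mult[OF bnd_const b2])
    apply (simp only: Is_cmult Is_diff[OF b1])
    done
  finally show ?thesis .
qed

lemma Is_lin: assumes "cl g"
  shows "Is P s (\<lambda>x. of_bool (g x s)) - 2 * Is P s (\<lambda>x. of_bool (g x s) * eta x s)
    = Is P s (\<lambda>x. of_bool (g x s) - 2 * (of_bool (g x s) * eta x s))"
proof -
  have b: "bnd (\<lambda>x. of_bool (g x s))" using assms unfolding cl_def by (intro bnd_ofbool) auto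
  show ?thesis
    apply (subst Is_diff)
      apply (rule b)
     apply (rule bnd_mult[OF bnd_const bnd_mult[OF b bnd_eta]])
    apply (simp add: Is_cmult)
    done
qed

lemma risk_diff:
  "risk P gt - risk P gs = Is P True (\<lambda>x. (of_bool (gt x True) - of_bool (gs x True)) * (1 - 2 * eta x True))
                         + Is P False (\<lambda>x. (of_bool (gt x False) - of_bool (gs x False)) * (1 - 2 * eta x False))"
proof -
  have d: "Is P s (\<lambda>x. (of_bool (gt x s) - of_bool (gs x s)) * (1 - 2 * eta x s))
     = Is P s (\<lambda>x. of_bool (gt x s) - 2 * (of_bool (gt x s) * eta x s))
       - Is P s (\<lambda>x. of_bool (gs x s) - 2 * (of_bool (gs x s) * eta x s))" for s
  proof -
    have eq: "(\<lambda>x. (of_bool (gt x s) - of_bool (gs x s)) * (1 - 2 * eta x s))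
      = (\<lambda>x. (of_bool (gt x s) - 2 * (of_bool (gt x s) * eta x s)) - (of_bool (gs x s) - 2 * (of_bool (gs x s) * eta x s)))"
      by (auto simp: fun_eq_iff algebra_simps)
    show ?thesis unfolding eq
      by (rule Is_diff; rule bnd_diff; rule bnd_mult[OF bnd_const bnd_mult[OF bnd_gt bnd_eta]]
         bnd_mult[OF bnd_const bnd_mult[OF bnd_gs bnd_eta]] bnd_gt bnd_gs)
  qed
  show ?thesis
    unfolding risk_formula[OF reg cl_gt] risk_formula[OF reg gs(1)] Is_lin[OF cl_gt] Is_lin[OF gs(1)] d
    by simp
qed

context
  assumes sm: "e True + e False \<le> dlt P eta"
begin

lemma e_le: "e s \<le> dlt P eta" using sm e_nonneg[of True] e_nonneg[of False] by (cases s) auto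

lemma dlt_le: "dlt P eta \<le> pYS P s / 2" "dlt P eta \<le> qS P eta False * pYS P True / 24"
   "dlt P eta \<le> qS P eta True * pYS P False / 24"
  unfolding dlt_def by (cases s; auto)+

lemma A_ge: "pYS P s / 2 \<le> A s"
  using A_close[of s] e_le[of s] dlt_le(1)[of s] by (auto simp: abs_le_iff)

lemma A_pos: "0 < A s" using A_ge[of s] pi_pos[of s] by linarith

lemma theta_up: "\<theta> \<le> A True"
proof (rule ccontr)
  assume th: "\<not> \<theta> \<le> A True"
  have AT: "0 < A True" "0 < A False" using A_pos by auto
  have "1 < \<theta> / A True" using th AT by (simp add: less_divide_eq)
  then have "\<not> gt x True" for x
  proof -
    assume c: "1 < \<theta> / A True"
    show "\<not> gt x True"
    proof (cases "0 \<le> 2 - \<theta> / A True")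
      case True
      have "h x True * (2 - \<theta> / A True) \<le> (2 - \<theta> / A True)"
        using mult_right_mono[of "h x True" 1 "2 - \<theta> / A True"] True hr[of x True] by simp
      then show ?thesis unfolding gt_T using c by linarith
    next
      case False
      have "h x True * (2 - \<theta> / A True) \<le> 0"
        using False hr[of x True] by (simp add: mult_nonneg_nonpos)
      then show ?thesis unfolding gt_T by linarith
    qed
  qed
  then have "Is P True (\<lambda>x. h x True * of_bool (gt x True)) = 0"
    using Is_const[of True 0] by simp
  then have "Is P False (\<lambda>x. h x False * of_bool (gt x False)) = 0"
    using peq' AT by simp
  then have z: "Is P False (\<lambda>x. h x False * of_bool (1 \<le> h x False * (2 + \<theta> / A False))) = 0"
    unfolding gt_F .
  have k: "2 + A True / A False \<le> 2 + \<theta> / A False"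
    using th AT by (simp add: divide_right_mono)
  have "qS P eta False / 2 \<le> A False / (2 * A False + A True) * qS P eta False + e False"
    by (rule side[OF AT(2) AT(1) k z])
  then show False
    using arith_contra[OF q_pos[of False] pi_pos[of True] A_ge[of True] A_le1[of True] AT(2) A_le1[of False]
       _ order_trans[OF e_le[of False] dlt_le(2)]] by blast
qed

lemma theta_low: "- A False \<le> \<theta>"
proof (rule ccontr)
  assume th: "\<not> - A False \<le> \<theta>"
  have AT: "0 < A True" "0 < A False" using A_pos by auto
  have "\<theta> / A False < -1" using th AT by (simp add: divide_less_eq)
  then have "\<not> gt x False" for x
  proof -
    assume c: "\<theta> / A False < -1"
    show "\<not> gt x False"
    proof (cases "0 \<le> 2 + \<theta> / A False")
      case True
      have "h x False * (2 + \<theta> / A False) \<le> (2 + \<theta> / A False)"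
        using mult_right_mono[of "h x False" 1 "2 + \<theta> / A False"] True hr[of x False] by simp
      then show ?thesis unfolding gt_F using c by linarith
    next
      case False
      have "h x False * (2 + \<theta> / A False) \<le> 0"
        using False hr[of x False] by (simp add: mult_nonneg_nonpos)
      then show ?thesis unfolding gt_F by linarith
    qed
  qed
  then have "Is P False (\<lambda>x. h x False * of_bool (gt x False)) = 0"
    using Is_const[of False 0] by simp
  then have "Is P True (\<lambda>x. h x True * of_bool (gt x True)) = 0"
    using peq' AT by simp
  then have z: "Is P True (\<lambda>x. h x True * of_bool (1 \<le> h x True * (2 - \<theta> / A True))) = 0"
    unfolding gt_T .
  have "A False / A True \<le> (- \<theta>) / A True"
    using divide_right_mono[of "A False" "- \<theta>" "A True"] th AT by simp
  then have k: "2 + A False / A True \<le> 2 - \<theta> / A True" by simp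
  have "qS P eta True / 2 \<le> A True / (2 * A True + A False) * qS P eta True + e True"
    by (rule side[OF AT(1) AT(2) k z])
  then show False
    using arith_contra[OF q_pos[of True] pi_pos[of False] A_ge[of False] A_le1[of False] AT(1) A_le1[of True]
       _ order_trans[OF e_le[of True] dlt_le(3)]] by blast
qed

lemma theta_abs: "\<bar>\<theta>\<bar> \<le> 1"
  using theta_up theta_low A_le1[of True] A_le1[of False] by linarith

lemma fair_eq: "Is P True (\<lambda>x. eta x True * of_bool (gs x True)) / pYS P True
   = Is P False (\<lambda>x. eta x False * of_bool (gs x False)) / pYS P False"
proof -
  from gs(2) have "condE P True (\<lambda>x. eta x True * of_bool (gs x True)) / (pYS P True / pS P True)
       = condE P False (\<lambda>x. eta x False * of_bool (gs x False)) / (pYS P False / pS P False)"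
    unfolding fair_form_def by blast
  then show ?thesis using pS_pos[of True] pS_pos[of False] unfolding condE_Is by simp
qed

lemma Uterm: "\<bar>Is P s (\<lambda>x. h x s * of_bool (gs x s)) / A s - Is P s (\<lambda>x. eta x s * of_bool (gs x s)) / pYS P s\<bar>
   \<le> 4 * e s / pYS P s"
proof (rule ratio)
  have b1: "bnd (\<lambda>x. h x s * of_bool (gs x s))" "bnd (\<lambda>x. eta x s * of_bool (gs x s))"
    by (rule bnd_mult[OF bnd_h bnd_gs], rule bnd_mult[OF bnd_eta bnd_gs])
  have "Is P s (\<lambda>x. h x s * of_bool (gs x s)) - Is P s (\<lambda>x. eta x s * of_bool (gs x s))
     = Is P s (\<lambda>x. h x s * of_bool (gs x s) - eta x s * of_bool (gs x s))"
    by (rule Is_diff[OF b1, symmetric])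
  also have "\<bar>\<dots>\<bar> \<le> Is P s (\<lambda>x. \<bar>h x s * of_bool (gs x s) - eta x s * of_bool (gs x s)\<bar>)"
    by (rule Is_abs)
  also have "\<dots> \<le> e s"
    by (rule Is_mono) (auto intro!: bnd_abs bnd_diff b1 simp: abs_minus_commute)
  finally show "\<bar>Is P s (\<lambda>x. h x s * of_bool (gs x s)) - Is P s (\<lambda>x. eta x s * of_bool (gs x s))\<bar> \<le> e s" .
  show "\<bar>A s - pYS P s\<bar> \<le> e s" by (rule A_close)
  show "0 \<le> Is P s (\<lambda>x. eta x s * of_bool (gs x s))" using eta_r by (intro Is_nonneg) auto
  show "Is P s (\<lambda>x. eta x s * of_bool (gs x s)) \<le> pYS P s"
    unfolding reg_pYS[OF reg] by (rule Is_mono) (auto intro!: b1 simp: eta_r)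
  show "pYS P s / 2 \<le> A s" by (rule A_ge)
  show "0 < pYS P s" by (rule pi_pos)
qed

lemma small: "risk P gt - risk P gs \<le> (2 + 4 / pYS P True + 4 / pYS P False) * (e True + e False)"
proof -
  define cT where "cT = \<theta> / A True"
  define cF where "cF = - \<theta> / A False"
  have AT: "0 < A True" "0 < A False" using A_pos by auto
  have gT: "gt x True = (1 \<le> h x True * (2 - cT))" for x unfolding gt_T cT_def ..
  have gF: "gt x False = (1 \<le> h x False * (2 - cF))" for x unfolding gt_F cF_def by simp
  define IT where "IT g = Is P True (\<lambda>x. h x True * of_bool (g x True))" for g :: "'x \<Rightarrow> bool \<Rightarrow> bool"
  define IF where "IF g = Is P False (\<lambda>x. h x False * of_bool (g x False))" for g :: "'x \<Rightarrow> bool \<Rightarrow> bool"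
  have "risk P gt - risk P gs \<le> (- cT * (IT gt - IT gs) + 2 * e True) + (- cF * (IF gt - IF gs) + 2 * e False)"
    unfolding risk_diff IT_def IF_def by (intro add_mono lag gT gF)
  also have "\<dots> = - \<theta> * (IT gt / A True - IF gt / A False) + \<theta> * (IT gs / A True - IF gs / A False)
       + 2 * (e True + e False)"
    unfolding cT_def cF_def using AT by (simp add: field_simps)
  also have "IT gt / A True - IF gt / A False = 0"
    using peq'[OF AT(1)[THEN less_imp_neq, symmetric] AT(2)[THEN less_imp_neq, symmetric]] unfolding IT_def IF_def by simp
  also have "IT gs / A True - IF gs / A False =
     (IT gs / A True - Is P True (\<lambda>x. eta x True * of_bool (gs x True)) / pYS P True)
     - (IF gs / A False - Is P False (\<lambda>x. eta x False * of_bool (gs x False)) / pYS P False)"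
    using fair_eq by simp
  also have "\<theta> * \<dots> \<le> 4 * e True / pYS P True + 4 * e False / pYS P False"
  proof -
    let ?u = "(IT gs / A True - Is P True (\<lambda>x. eta x True * of_bool (gs x True)) / pYS P True)
     - (IF gs / A False - Is P False (\<lambda>x. eta x False * of_bool (gs x False)) / pYS P False)"
    have "\<bar>?u\<bar> \<le> 4 * e True / pYS P True + 4 * e False / pYS P False"
      using Uterm[of True] Uterm[of False] unfolding IT_def IF_def by linarith
    moreover have "\<theta> * ?u \<le> \<bar>?u\<bar>"
    proof -
      have "\<theta> * ?u \<le> \<bar>\<theta> * ?u\<bar>" by linarith
      also have "\<dots> = \<bar>\<theta>\<bar> * \<bar>?u\<bar>" by (simp add: abs_mult)
      also have "\<dots> \<le> 1 * \<bar>?u\<bar>" using theta_abs by (intro mult_right_mono) auto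
      finally show ?thesis by simp
    qed
    ultimately show ?thesis by linarith
  qed
  finally have r: "risk P gt - risk P gs \<le> 4 * e True / pYS P True + 4 * e False / pYS P False + 2 * (e True + e False)"
    by simp
  have "4 * e True / pYS P True \<le> 4 / pYS P True * (e True + e False)"
    using e_nonneg[of False] pi_pos[of True] by (simp add: divide_right_mono)
  moreover have "4 * e False / pYS P False \<le> 4 / pYS P False * (e True + e False)"
    using e_nonneg[of True] pi_pos[of False] by (simp add: divide_right_mono)
  ultimately show ?thesis using r by (simp add: algebra_simps)
qed

end

lemma core_bound: "risk P gt - risk P gs \<le> Kc P eta * (e True + e False)"
proof (cases "e True + e False \<le> dlt P eta")
  case True
  have "risk P gt - risk P gs \<le> (2 + 4 / pYS P True + 4 / pYS P False) * (e True + e False)"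
    by (rule small[OF True])
  also have "\<dots> \<le> Kc P eta * (e True + e False)"
    using Kc_ge(1) e_nonneg[of True] e_nonneg[of False] by (intro mult_right_mono) auto
  finally show ?thesis .
next
  case False
  have "risk P gt \<le> 1" unfolding risk_def using prob_space.prob_le_1[OF prob] by blast
  moreover have "0 \<le> risk P gs" unfolding risk_def by simp
  moreover have "1 \<le> 1 / dlt P eta * (e True + e False)"
    using False dlt_pos by (simp add: field_simps)
  moreover have "1 / dlt P eta * (e True + e False) \<le> Kc P eta * (e True + e False)"
    using Kc_ge(2) e_nonneg[of True] e_nonneg[of False] by (intro mult_right_mono) auto
  ultimately show ?thesis by linarith
qed

end

theorem mainTheorem7:
  fixes P :: "(real ^ 'd) obs measure"
    and eta :: "real ^ 'd \<Rightarrow> bool \<Rightarrow> real"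
    and eta_hat :: "nat \<Rightarrow> (nat \<Rightarrow> (real ^ 'd) obs) \<Rightarrow> real ^ 'd \<Rightarrow> bool \<Rightarrow> real"
    and theta_til :: "nat \<Rightarrow> (nat \<Rightarrow> (real ^ 'd) obs) \<Rightarrow> real"
    and gstar :: "real ^ 'd \<Rightarrow> bool \<Rightarrow> bool"
    and c :: "nat \<Rightarrow> real"
    and N :: "nat \<Rightarrow> nat"
  assumes P: "prob_space P" "sets P = sets obs_space"
    and pS_bounds: "0 < pS P True" "pS P True < 1"
    and pY_bounds: "0 < pY P" "pY P < 1"
    and eta: "is_regression P eta"
    \<comment> \<open>Continuity Assumption\<close>
    and cont: "\<And>s. continuous_on {0<..<1} (\<lambda>t. condE P s (\<lambda>x. of_bool (eta x s \<le> t)))"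
    and half: "\<And>s. condE P s (\<lambda>x. of_bool (eta x s \<ge> 1/2)) > 0"
    \<comment> \<open>the estimator eta_hat n is built from D_n\<close>
    and eh_meas: "\<And>n. (\<lambda>(D, x, s). eta_hat n D x s)
                      \<in> borel_measurable (sample P n \<Otimes>\<^sub>M (borel \<Otimes>\<^sub>M count_space UNIV))"
    and eh_range: "\<And>n D x s. 0 \<le> eta_hat n D x s \<and> eta_hat n D x s \<le> 1"
    \<comment> \<open>Consistency Assumption (i)\<close>
    and consist: "\<And>s. (\<lambda>n. \<integral>D. condE P s (\<lambda>x. \<bar>eta x s - eta_hat n D x s\<bar>) \<partial>sample P n)
                        \<longlonglongrightarrow> 0"
    \<comment> \<open>Consistency Assumption (ii)\<close>
    and c_pos: "\<And>n. c n > 0"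
    and c_lim: "c \<longlonglongrightarrow> 0"
    and cN_lim: "(\<lambda>n. 1 / (c n * sqrt (real (N n)))) \<longlonglongrightarrow> 0"
    and c_bound: "\<And>n s. AE D in sample P n. condE P s (\<lambda>x. eta_hat n D x s) \<ge> c n"
    \<comment> \<open>Estimator Continuity Assumption\<close>
    and eh_cont: "\<And>n. AE D in sample P n. \<forall>s.
                     continuous_on {0<..<1} (\<lambda>t. condE P s (\<lambda>x. of_bool (eta_hat n D x s \<le> t)))"
    \<comment> \<open>theta_til n D is a solution of the pseudo-oracle equation\<close>
    and theta_meas: "\<And>n. theta_til n \<in> borel_measurable (sample P n)"
    and theta_sol: "\<And>n. AE D in sample P n. pseudo_eq P (eta_hat n D) (theta_til n D)"
    \<comment> \<open>gstar is the optimal fair classifier\<close>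
    and gstar: "optimal_fair P gstar" "fair_form P eta gstar"
  shows "limsup (\<lambda>n. ereal ((\<integral>D. risk P (gtil P (eta_hat n D) (theta_til n D)) \<partial>sample P n)
                            - risk P gstar)) \<le> 0"
proof -
  interpret setting P by (rule setting.intro) (rule P)+
  interpret core P eta by (rule core.intro, unfold_locales) (rule P eta pS_bounds half)+
  have gcl: "cl gstar"
    using gstar(1) unfolding optimal_fair_def classifier_def cl_def
  proof (intro allI, elim conjE)
    fix s assume m: "(\<lambda>(x, s). gstar x s) \<in> measurable (borel \<Otimes>\<^sub>M count_space UNIV) (count_space UNIV)"
    have "(\<lambda>x. (\<lambda>(x, s). gstar x s) (x, s)) \<in> measurable borel (count_space UNIV)"
      using m by measurable
    then show "(\<lambda>x. gstar x s) \<in> measurable borel (count_space UNIV)" by simp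
  qed
  have sp: "prob_space (sample P n)" for n
    unfolding sample_def by (rule prob_space_PiM) (rule P(1))
  have ehD: "(\<lambda>x. eta_hat n D x s) \<in> borel_measurable borel" if D: "D \<in> space (sample P n)" for n D s
  proof -
    have "(\<lambda>x. (D, x, s)) \<in> measurable borel (sample P n \<Otimes>\<^sub>M (borel \<Otimes>\<^sub>M count_space UNIV))"
      using D by measurable
    from measurable_compose[OF this eh_meas[of n]] show ?thesis by simp
  qed
  define E where "E n s D = condE P s (\<lambda>x. \<bar>eta x s - eta_hat n D x s\<bar>)" for n s D
  have E_nonneg: "0 \<le> E n s D" for n s D
    unfolding E_def condE_Is using pS_pos[of s] by (intro divide_nonneg_pos Is_nonneg) auto
  have E_meas: "E n s \<in> borel_measurable (sample P n)" for n s
  proof -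
    interpret sigma_finite_measure P
      using P(1) by (simp add: prob_space_imp_sigma_finite)
    have m1: "(\<lambda>p. (fst p, fst (snd p), s)) \<in> measurable (sample P n \<Otimes>\<^sub>M P) (sample P n \<Otimes>\<^sub>M (borel \<Otimes>\<^sub>M count_space UNIV))"
      by measurable
    have m2: "(\<lambda>p. eta_hat n (fst p) (fst (snd p)) s) \<in> borel_measurable (sample P n \<Otimes>\<^sub>M P)"
      using measurable_compose[OF m1 eh_meas[of n]] by simp
    have "(\<lambda>(D, z). if fst (snd z) = s then \<bar>eta (fst z) s - eta_hat n D (fst z) s\<bar> else 0)
        \<in> borel_measurable (sample P n \<Otimes>\<^sub>M P)"
      using m2 by measurable
    then have "(\<lambda>D. \<integral>z. (if fst (snd z) = s then \<bar>eta (fst z) s - eta_hat n D (fst z) s\<bar> else 0) \<partial>P)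
        \<in> borel_measurable (sample P n)"
      by (rule borel_measurable_lebesgue_integral)
    then show ?thesis unfolding E_def condE_def by measurable
  qed
  have E_le: "E n s D \<le> 1" if D: "D \<in> space (sample P n)" for n s D
  proof -
    have b: "bnd (\<lambda>x. \<bar>eta x s - eta_hat n D x s\<bar>)"
      using ehD[OF D] eh_range by (intro bnd_abs bnd_diff bnd_eta bnd_01) auto
    have "Is P s (\<lambda>x. \<bar>eta x s - eta_hat n D x s\<bar>) \<le> Is P s (\<lambda>_. 1)"
    proof (rule Is_mono[OF b bnd_const])
      fix x show "\<bar>eta x s - eta_hat n D x s\<bar> \<le> 1" using eta_r[of x s] eh_range[of n D x s] by auto
    qed
    then show ?thesis unfolding E_def condE_Is Is_const using pS_pos[of s] by simp
  qed
  have E_int: "integrable (sample P n) (E n s)" for n s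
  proof -
    interpret sn: prob_space "sample P n" by (rule sp)
    show ?thesis
      by (rule sn.integrable_const_bound[where B=1]) (auto intro!: AE_I2 simp: E_le E_nonneg E_meas abs_of_nonneg)
  qed
  define b where "b n = Kc P eta * (pS P True * (\<integral>D. E n True D \<partial>sample P n) + pS P False * (\<integral>D. E n False D \<partial>sample P n))" for n
  have Kc0: "0 \<le> Kc P eta" using Kc_ge(2) dlt_pos by (meson dual_order.trans less_imp_le zero_le_divide_1_iff)
  have b0: "0 \<le> b n" for n
    unfolding b_def using Kc0 pS_pos[of True] pS_pos[of False] E_nonneg
    by (intro mult_nonneg_nonneg add_nonneg_nonneg integral_nonneg_AE) (auto intro: less_imp_le)
  have pw: "AE D in sample P n. risk P (gtil P (eta_hat n D) (theta_til n D)) - risk P gstar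
       \<le> Kc P eta * (pS P True * E n True D + pS P False * E n False D)" for n
    using theta_sol[of n] AE_space[of "sample P n"]
  proof eventually_elim
    case (elim D)
    interpret c2: core2 P eta "eta_hat n D" "theta_til n D" gstar
      by (unfold_locales) (use ehD[OF elim(2)] eh_range elim(1) gcl gstar(2) in auto)
    have "Is P s (\<lambda>x. \<bar>eta x s - eta_hat n D x s\<bar>) = pS P s * E n s D" for s
      unfolding E_def condE_Is using pS_pos[of s] by simp
    then show ?case using c2.core_bound by simp
  qed
  have ab: "(\<integral>D. risk P (gtil P (eta_hat n D) (theta_til n D)) \<partial>sample P n) - risk P gstar \<le> b n" for n
  proof (cases "integrable (sample P n) (\<lambda>D. risk P (gtil P (eta_hat n D) (theta_til n D)))")
    case True
    interpret sn: prob_space "sample P n" by (rule sp)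
    have "(\<integral>D. risk P (gtil P (eta_hat n D) (theta_til n D)) \<partial>sample P n)
       \<le> (\<integral>D. risk P gstar + Kc P eta * (pS P True * E n True D + pS P False * E n False D) \<partial>sample P n)"
      by (rule integral_mono_AE[OF True]) (use pw[of n] E_int in \<open>auto elim!: eventually_mono\<close>)
    also have "\<dots> = risk P gstar + b n"
      unfolding b_def using E_int by (simp add: sn.prob_space)
    finally show ?thesis by simp
  next
    case False
    then have "(\<integral>D. risk P (gtil P (eta_hat n D) (theta_til n D)) \<partial>sample P n) = 0"
      by (rule not_integrable_integral_eq)
    moreover have "0 \<le> risk P gstar" unfolding risk_def by simp
    ultimately show ?thesis using b0[of n] by simp
  qed
  have blim: "b \<longlonglongrightarrow> 0"
  proof -
    have "(\<lambda>n. Kc P eta * (pS P True * (\<integral>D. E n True D \<partial>sample P n) + pS P False * (\<integral>D. E n False D \<partial>sample P n)))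
       \<longlonglongrightarrow> Kc P eta * (pS P True * 0 + pS P False * 0)"
      using consist[of True] consist[of False] unfolding E_def
      by (intro tendsto_intros)
    moreover have "b = (\<lambda>n. Kc P eta * (pS P True * (\<integral>D. E n True D \<partial>sample P n) + pS P False * (\<integral>D. E n False D \<partial>sample P n)))"
      by (rule ext) (simp only: b_def)
    ultimately show ?thesis by simp
  qed
  have "limsup (\<lambda>n. ereal ((\<integral>D. risk P (gtil P (eta_hat n D) (theta_til n D)) \<partial>sample P n) - risk P gstar))
      \<le> limsup (\<lambda>n. ereal (b n))"
    by (rule Limsup_mono) (simp add: ab)
  also have "\<dots> = ereal 0"
    by (rule lim_imp_Limsup) (simp_all add: blim)
  finally show ?thesis by (simp add: zero_ereal_def)
qed

end
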